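(* Let $n\ge 2$ and $t\ge 2$ be integers. Then there exists a constant $c>0$, depending only on $n$ and $t$, such that for every sufficiently large integer $q$ there exists a $t$-MIPPC$(n,q)$ of size at least $c\,q^{\frac{tn}{2t-1}}$; that is, $M_t(n,q)\ge c\,q^{\frac{tn}{2t-1}}$.
   Context: Let $Q$ be an alphabet with $|Q|=q$. An $(n,q)$ code is a subset $\mathcal{C}\subseteq Q^n$. For $\mathcal{S}\subseteq Q^n$ and $1\le i\le n$ let $\mathcal{S}(i)=\{\mathbf{c}(i):\mathbf{c}\in\mathcal{S}\}$, and let $\mathrm{desc}(\mathcal{S})=\mathcal{S}(1)\times\cdots\times\mathcal{S}(n)$. An $(n,q)$ code $\mathcal{C}$ is a $t$-MIPPC$(n,q)$ ($t$-identifiable parent property for multimedia fingerprinting) if for every nonempty $\mathcal{C}'\subseteq\mathcal{C}$ with $|\mathcal{C}'|\le t$ we have $\bigcap_{\mathcal{S}\in S_t(\mathcal{C}')}\mathcal{S}\neq\emptyset$, where $S_t(\mathcal{C}')=\{\mathcal{S}\subseteq\mathcal{C}: |\mathcal{S}|\le t,\ \mathrm{desc}(\mathcal{S})=\mathrm{desc}(\mathcal{C}')\}$. $M_t(n,q)$ denotes the maximum size $|\mathcal{C}|$ of a $t$-MIPPC$(n,q)$. *)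

theory Defs
  imports Complex_Main
begin

definition words :: "nat \<Rightarrow> nat \<Rightarrow> nat list set" where
  "words n q = {w. length w = n \<and> set w \<subseteq> {..<q}}"

definition coord :: "nat list set \<Rightarrow> nat \<Rightarrow> nat set" where
  "coord S i = {c ! i | c. c \<in> S}"

definition desc :: "nat \<Rightarrow> nat list set \<Rightarrow> nat list set" where
  "desc n S = {w. length w = n \<and> (\<forall>i<n. w ! i \<in> coord S i)}"

definition S_t :: "nat \<Rightarrow> nat \<Rightarrow> nat list set \<Rightarrow> nat list set \<Rightarrow> nat list set set" where
  "S_t t n C C' = {S. S \<subseteq> C \<and> card S \<le> t \<and> desc n S = desc n C'}"

definition is_MIPPC :: "nat \<Rightarrow> nat \<Rightarrow> nat \<Rightarrow> nat list set \<Rightarrow> bool" where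
  "is_MIPPC t n q C \<longleftrightarrow> C \<subseteq> words n q \<and>
     (\<forall>C'. C' \<subseteq> C \<and> C' \<noteq> {} \<and> card C' \<le> t \<longrightarrow> \<Inter> (S_t t n C C') \<noteq> {})"

end

theory Submission
  imports Defs "HOL-Library.FuncSet"
begin

definition badC :: "nat \<Rightarrow> nat \<Rightarrow> nat list set \<Rightarrow> nat list set \<Rightarrow> bool" where
  "badC t n C C' \<longleftrightarrow> C' \<subseteq> C \<and> C' \<noteq> {} \<and> card C' \<le> t \<and>
     (\<forall>c\<in>C'. \<forall>i<n. \<exists>d\<in>C. d \<noteq> c \<and> d \<in> desc n C' \<and> d ! i = c ! i)"

lemma coord_image: "coord S i = (\<lambda>c. c ! i) ` S"
  unfolding coord_def by auto

lemma noBad_MIPPC: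
  assumes W: "C \<subseteq> words n q" and nb: "\<And>C'. \<not> badC t n C C'"
  shows "is_MIPPC t n q C"
  unfolding is_MIPPC_def
proof (intro conjI allI impI)
  show "C \<subseteq> words n q" by fact
  fix C' assume h: "C' \<subseteq> C \<and> C' \<noteq> {} \<and> card C' \<le> t"
  then obtain c i where c: "c \<in> C'" "i < n" and
     nd: "\<And>d. d \<in> C \<Longrightarrow> d \<noteq> c \<Longrightarrow> d \<in> desc n C' \<Longrightarrow> d ! i \<noteq> c ! i"
    using nb[of C'] unfolding badC_def by blast
  have "c \<in> \<Inter> (S_t t n C C')"
  proof
    fix S assume "S \<in> S_t t n C C'"
    hence S: "S \<subseteq> C" "desc n S = desc n C'" unfolding S_t_def by auto
    have "length c = n" using c h W unfolding words_def by auto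
    hence "c \<in> desc n C'" using c unfolding desc_def coord_def by auto
    hence "c \<in> desc n S" using S by simp
    hence "c ! i \<in> coord S i" using c unfolding desc_def by auto
    then obtain d where d: "d \<in> S" "d ! i = c ! i" unfolding coord_def by auto
    have "length d = n" using d S W unfolding words_def by auto
    hence "d \<in> desc n S" using d unfolding desc_def coord_def by auto
    hence "d \<in> desc n C'" using S by simp
    hence "d = c" using nd[of d] d S by blast
    thus "c \<in> S" using d by simp
  qed
  thus "\<Inter> (S_t t n C C') \<noteq> {}" by blast
qed

lemma fiber2:
  assumes "finite W" "\<And>x. x \<in> g ` W \<Longrightarrow> 2 \<le> card {y\<in>W. g y = x}"
  shows "2 * card (g ` W) \<le> card W"
proof -
  have "card W = card (\<Union>x\<in>g ` W. {y\<in>W. g y = x})" by (rule arg_cong[where f=card]) auto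
  also have "\<dots> = (\<Sum>x\<in>g ` W. card {y\<in>W. g y = x})"
    using assms(1) by (intro card_UN_disjoint) auto
  also have "\<dots> \<ge> (\<Sum>x\<in>g ` W. 2)" by (intro sum_mono assms(2))
  finally show ?thesis by simp
qed

definition smallW :: "nat \<Rightarrow> nat \<Rightarrow> nat list set \<Rightarrow> bool" where
  "smallW t n W \<longleftrightarrow> 2 \<le> card W \<and> card W \<le> t + t * n \<and>
     (\<forall>j<n. card ((\<lambda>w. w ! j) ` W) \<le> min t (card W div 2))"

lemma bad_smallW:
  assumes "finite C" "badC t n C C'" "n \<ge> 1"
  shows "\<exists>W\<subseteq>C. smallW t n W"
proof -
  have C': "C' \<subseteq> C" "C' \<noteq> {}" "card C' \<le> t"
    and b: "\<forall>c\<in>C'. \<forall>i<n. \<exists>d\<in>C. d \<noteq> c \<and> d \<in> desc n C' \<and> d ! i = c ! i"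
    using assms(2) unfolding badC_def by auto
  obtain w where w: "\<And>c i. c \<in> C' \<Longrightarrow> i < n \<Longrightarrow> w c i \<in> C \<and> w c i \<noteq> c \<and> w c i \<in> desc n C' \<and> w c i ! i = c ! i"
    using b by metis
  define W where "W = C' \<union> (\<lambda>(c,i). w c i) ` (C' \<times> {..<n})"
  have fC': "finite C'" using C' assms(1) finite_subset by blast
  have WC: "W \<subseteq> C" unfolding W_def using C' w by auto
  have fW: "finite W" using WC assms(1) finite_subset by blast
  have "card W \<le> card C' + card ((\<lambda>(c,i). w c i) ` (C' \<times> {..<n}))"
    unfolding W_def by (rule card_Un_le)
  also have "\<dots> \<le> card C' + card (C' \<times> {..<n})" by (intro add_left_mono card_image_le) (use fC' in auto)
  also have "\<dots> = card C' + card C' * n" by (simp add: card_cartesian_product)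
  also have "\<dots> \<le> t + t * n" using C' by (intro add_mono mult_right_mono) auto
  finally have c1: "card W \<le> t + t * n" .
  obtain c0 where c0: "c0 \<in> C'" using C' by auto
  have "c0 \<in> W" "w c0 0 \<in> W" "w c0 0 \<noteq> c0" using c0 w[of c0 0] assms(3) unfolding W_def by force+
  hence "{c0, w c0 0} \<subseteq> W" "card {c0, w c0 0} = 2" by auto
  hence c2: "2 \<le> card W" using card_mono[OF fW, of "{c0, w c0 0}"] by simp
  have c3: "card ((\<lambda>x. x ! j) ` W) \<le> min t (card W div 2)" if j: "j < n" for j
  proof -
    have sub: "(\<lambda>x. x ! j) ` W \<subseteq> (\<lambda>x. x ! j) ` C'"
    proof
      fix y assume "y \<in> (\<lambda>x. x ! j) ` W"
      then obtain x where x: "x \<in> W" "y = x ! j" by auto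
      show "y \<in> (\<lambda>x. x ! j) ` C'"
      proof (cases "x \<in> C'")
        case True thus ?thesis using x by auto
      next
        case False
        then obtain c i where "c \<in> C'" "i < n" "x = w c i" using x unfolding W_def by auto
        hence "x \<in> desc n C'" using w by auto
        hence "x ! j \<in> coord C' j" using j unfolding desc_def by auto
        thus ?thesis using x unfolding coord_image by auto
      qed
    qed
    have A: "card ((\<lambda>x. x ! j) ` W) \<le> t"
      using card_mono[OF _ sub] card_image_le[OF fC', of "\<lambda>x. x ! j"] C' fC' by fastforce
    have "2 * card ((\<lambda>x. x ! j) ` W) \<le> card W"
    proof (rule fiber2[OF fW])
      fix y assume "y \<in> (\<lambda>x. x ! j) ` W"
      then obtain c where c: "c \<in> C'" "y = c ! j" using sub by auto
      have "c \<in> W" "w c j \<in> W" "w c j \<noteq> c" "w c j ! j = c ! j" using c w[of c j] j unfolding W_def by force+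
      hence "{c, w c j} \<subseteq> {x\<in>W. x ! j = y}" "card {c, w c j} = 2" using c by auto
      moreover have "finite {x\<in>W. x ! j = y}" using fW by simp
      ultimately show "2 \<le> card {x\<in>W. x ! j = y}" using card_mono by metis
    qed
    thus ?thesis using A by simp
  qed
  show ?thesis using WC c1 c2 c3 unfolding smallW_def by blast
qed

lemma card_words: "card (words n q) = q ^ n"
proof -
  have "words n q = {xs. set xs \<subseteq> {..<q} \<and> length xs = n}" unfolding words_def by auto
  thus ?thesis by (simp add: card_lists_length_eq)
qed

lemma finite_words: "finite (words n q)"
proof -
  have "words n q = {xs. set xs \<subseteq> {..<q} \<and> length xs = n}" unfolding words_def by auto
  thus ?thesis by (simp add: finite_lists_length_eq)
qed

lemma factor_fun:
  fixes g :: "'x \<Rightarrow> nat"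
  assumes "finite I" "card (g ` I) \<le> v" "g ` I \<subseteq> {..<q}" "q \<ge> 1"
  shows "\<exists>\<phi> \<psi>. \<phi> \<in> {..<v} \<rightarrow>\<^sub>E {..<q} \<and> \<psi> \<in> I \<rightarrow>\<^sub>E {..<v} \<and> (\<forall>a\<in>I. \<phi> (\<psi> a) = g a)"
proof -
  let ?S = "g ` I"
  obtain e where e: "bij_betw e {0..<card ?S} ?S" using ex_bij_betw_nat_finite[OF finite_imageI[OF assms(1)]] by blast
  define \<psi> where "\<psi> = restrict (\<lambda>a. inv_into {0..<card ?S} e (g a)) I"
  define \<phi> where "\<phi> = restrict (\<lambda>j. if j < card ?S then e j else 0) {..<v}"
  have 1: "\<phi> \<in> {..<v} \<rightarrow>\<^sub>E {..<q}"
  proof -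
    have "e ` {0..<card ?S} \<subseteq> {..<q}" using e assms(3) by (simp add: bij_betw_def)
    thus ?thesis unfolding \<phi>_def using assms(4) by (auto simp: image_subset_iff)
  qed
  have 2: "\<psi> a \<in> {0..<card ?S}" if "a \<in> I" for a
  proof -
    have "g a \<in> e ` {0..<card ?S}" using e that by (simp add: bij_betw_def)
    from inv_into_into[OF this] show ?thesis unfolding \<psi>_def using that by simp
  qed
  have ex: "\<psi> \<in> extensional I" unfolding \<psi>_def by simp
  have lt: "\<forall>a\<in>I. \<psi> a < v"
  proof
    fix a assume "a \<in> I"
    from 2[OF this] have "\<psi> a < card ?S" by simp
    with assms(2) show "\<psi> a < v" by linarith
  qed
  have psiE: "\<psi> \<in> I \<rightarrow>\<^sub>E {..<v}" using ex lt by (simp add: PiE_iff)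
  have 3: "\<phi> (\<psi> a) = g a" if "a \<in> I" for a
  proof -
    have "\<psi> a < card ?S" using 2[OF that] by simp
    moreover have "\<psi> a < v" using lt that by blast
    ultimately have "\<psi> a < v" "\<psi> a < card ?S" by auto
    hence "\<phi> (\<psi> a) = e (\<psi> a)" unfolding \<phi>_def by auto
    also have "\<dots> = g a" unfolding \<psi>_def using that e by (simp add: bij_betw_inv_into_right)
    finally show ?thesis .
  qed
  show ?thesis using 1 psiE 3 by blast
qed

lemma count_cond:
  assumes IM: "I \<subseteq> {..<M}" and q: "q \<ge> 1"
  shows "card {f \<in> {..<M} \<rightarrow>\<^sub>E words n q. \<forall>j<n. card ((\<lambda>a. f a ! j) ` I) \<le> v}
     \<le> (q^v)^n * (v^n)^(card I) * (q^n)^(M - card I)"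
proof -
  define D where "D = ({..<n} \<rightarrow>\<^sub>E ({..<v} \<rightarrow>\<^sub>E {..<q})) \<times> ((I \<rightarrow>\<^sub>E ({..<n} \<rightarrow>\<^sub>E {..<v})) \<times> (({..<M} - I) \<rightarrow>\<^sub>E words n q))"
  define G where "G = (\<lambda>(\<Phi>::nat\<Rightarrow>nat\<Rightarrow>nat, \<Psi>::nat\<Rightarrow>nat\<Rightarrow>nat, R::nat\<Rightarrow>nat list).
      (\<lambda>a. if a \<in> I then map (\<lambda>j. \<Phi> j (\<Psi> a j)) [0..<n] else R a))"
  have fI: "finite I" using IM finite_subset by blast
  have cD: "card D = (q^v)^n * ((v^n)^(card I) * (q^n)^(M - card I))"
    unfolding D_def using fI IM
    by (simp only: card_cartesian_product card_PiE[OF finite_lessThan] card_PiE[OF fI]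
      card_PiE[OF finite_Diff[OF finite_lessThan]] card_words card_lessThan prod_constant card_Diff_subset[OF fI IM])
  have sub: "{f \<in> {..<M} \<rightarrow>\<^sub>E words n q. \<forall>j<n. card ((\<lambda>a. f a ! j) ` I) \<le> v} \<subseteq> G ` D"
  proof
    fix f assume f: "f \<in> {f \<in> {..<M} \<rightarrow>\<^sub>E words n q. \<forall>j<n. card ((\<lambda>a. f a ! j) ` I) \<le> v}"
    have fw: "\<And>a. a \<in> I \<Longrightarrow> f a \<in> words n q" using f IM by auto
    have "\<forall>j\<in>{..<n}. \<exists>\<phi> \<psi>. \<phi> \<in> {..<v} \<rightarrow>\<^sub>E {..<q} \<and> \<psi> \<in> I \<rightarrow>\<^sub>E {..<v} \<and> (\<forall>a\<in>I. \<phi> (\<psi> a) = f a ! j)"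
    proof
      fix j assume j: "j \<in> {..<n}"
      have "(\<lambda>a. f a ! j) ` I \<subseteq> {..<q}"
      proof
        fix y assume "y \<in> (\<lambda>a. f a ! j) ` I"
        then obtain a where a: "a \<in> I" "y = f a ! j" by auto
        have "length (f a) = n" "set (f a) \<subseteq> {..<q}" using fw[OF a(1)] unfolding words_def by auto
        have "f a ! j \<in> set (f a)" using j \<open>length (f a) = n\<close> by (intro nth_mem) simp
        hence "f a ! j \<in> {..<q}" using \<open>set (f a) \<subseteq> {..<q}\<close> by blast
        thus "y \<in> {..<q}" using a by simp
      qed
      thus "\<exists>\<phi> \<psi>. \<phi> \<in> {..<v} \<rightarrow>\<^sub>E {..<q} \<and> \<psi> \<in> I \<rightarrow>\<^sub>E {..<v} \<and> (\<forall>a\<in>I. \<phi> (\<psi> a) = f a ! j)"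
        using factor_fun[OF fI _ _ q, of "\<lambda>a. f a ! j" v] f j by auto
    qed
    then obtain \<phi> \<psi> where ph: "\<And>j. j < n \<Longrightarrow> \<phi> j \<in> {..<v} \<rightarrow>\<^sub>E {..<q} \<and> \<psi> j \<in> I \<rightarrow>\<^sub>E {..<v} \<and> (\<forall>a\<in>I. \<phi> j (\<psi> j a) = f a ! j)"
      by (metis lessThan_iff)
    define \<Phi> where "\<Phi> = restrict \<phi> {..<n}"
    define \<Psi> where "\<Psi> = restrict (\<lambda>a. restrict (\<lambda>j. \<psi> j a) {..<n}) I"
    define R where "R = restrict f ({..<M} - I)"
    have m1: "\<Phi> \<in> {..<n} \<rightarrow>\<^sub>E ({..<v} \<rightarrow>\<^sub>E {..<q})" unfolding \<Phi>_def using ph by (simp add: restrict_PiE_iff)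
    have "\<psi> j a < v" if "a \<in> I" "j < n" for a j using PiE_mem[of "\<psi> j" I "\<lambda>_. {..<v}" a] ph[OF that(2)] that(1) by simp
    hence m2: "\<Psi> \<in> I \<rightarrow>\<^sub>E ({..<n} \<rightarrow>\<^sub>E {..<v})" unfolding \<Psi>_def by (simp add: restrict_PiE_iff)
    have "f a \<in> words n q" if "a \<in> {..<M} - I" for a using PiE_mem[of f "{..<M}" "\<lambda>_. words n q" a] f that by simp
    hence m3: "R \<in> ({..<M} - I) \<rightarrow>\<^sub>E words n q" unfolding R_def by (simp add: restrict_PiE_iff)
    have "(\<Phi>, \<Psi>, R) \<in> D" unfolding D_def using m1 m2 m3 by simp
    moreover have "G (\<Phi>, \<Psi>, R) = f"
    proof
      fix a
      show "G (\<Phi>, \<Psi>, R) a = f a"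
      proof (cases "a \<in> I")
        case True
        have len: "length (f a) = n" using fw[OF True] unfolding words_def by auto
        have "G (\<Phi>, \<Psi>, R) a = map (\<lambda>j. \<phi> j (\<psi> j a)) [0..<n]"
          unfolding G_def \<Phi>_def \<Psi>_def using True by simp
        also have "\<dots> = map (\<lambda>j. f a ! j) [0..<n]" using ph True by simp
        also have "\<dots> = f a" by (metis len map_nth)
        finally show ?thesis .
      next
        case False
        have fP: "f \<in> {..<M} \<rightarrow>\<^sub>E words n q" using f by simp
        have "G (\<Phi>, \<Psi>, R) a = R a" unfolding G_def using False by simp
        also have "\<dots> = f a"
        proof (cases "a \<in> {..<M}")
          case True thus ?thesis unfolding R_def using False by simp
        next
          case nM: False thus ?thesis unfolding R_def using PiE_arb[OF fP nM] by simp
        qed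
        finally show ?thesis .
      qed
    qed
    ultimately show "f \<in> G ` D" by (metis image_eqI)
  qed
  have fD: "finite D" unfolding D_def using fI by (simp add: finite_PiE finite_words)
  have "card {f \<in> {..<M} \<rightarrow>\<^sub>E words n q. \<forall>j<n. card ((\<lambda>a. f a ! j) ` I) \<le> v} \<le> card (G ` D)"
    by (rule card_mono[OF finite_imageI[OF fD] sub])
  also have "\<dots> \<le> card D" by (rule card_image_le[OF fD])
  also have "\<dots> = (q^v)^n * ((v^n)^(card I) * (q^n)^(M - card I))" by (rule cD)
  finally show ?thesis by (simp only: mult.assoc)
qed

lemma key_ineq:
  fixes k t :: nat
  assumes "2 \<le> k" "1 \<le> t"
  shows "real t * (real k - 1) \<le> (real k - real (min t (k div 2))) * (2 * real t - 1)"
proof (cases "k div 2 \<le> t")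
  case True
  define v where "v = k div 2"
  have mv: "min t (k div 2) = v" using True v_def by simp
  have vt: "real v \<le> real t" using True v_def by simp
  show ?thesis
  proof (cases "even k")
    case True
    hence k: "real k = 2 * real v" unfolding v_def by (metis dvd_mult_div_cancel of_nat_mult of_nat_numeral)
    have "(real k - real v) * (2 * real t - 1) - real t * (real k - 1) = real t - real v"
      unfolding k by (simp add: algebra_simps)
    thus ?thesis using mv vt by simp
  next
    case False
    hence "k = 2 * v + 1" unfolding v_def by presburger
    hence k: "real k = 2 * real v + 1" by simp
    have "(real k - real v) * (2 * real t - 1) - real t * (real k - 1) = 2 * real t - real v - 1"
      unfolding k by (simp add: algebra_simps)
    moreover have "real v + 1 \<le> 2 * real t" using vt assms(2) by simp
    ultimately show ?thesis using mv by simp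
  qed
next
  case False
  hence mv: "min t (k div 2) = t" by simp
  have k2: "2 * real t + 2 \<le> real k" using False by linarith
  have "(real k - real t) * (2 * real t - 1) - real t * (real k - 1) = (real t - 1) * (real k - 2 * real t)"
    by (simp add: algebra_simps)
  moreover have "0 \<le> (real t - 1) * (real k - 2 * real t)" using k2 assms(2) by simp
  ultimately show ?thesis using mv by simp
qed

lemma term_bound:
  fixes M k n t q :: nat and c0 :: real
  assumes k2: "2 \<le> k" and t1: "t \<ge> 1" and q1: "q \<ge> 1" and c0: "0 < c0" "c0 \<le> 1"
    and Mb: "real M \<le> c0 * (real q powr (real (t * n) / real (2 * t - 1)))"
  shows "real M ^ k * real q ^ (min t (k div 2) * n) \<le> real M * c0 * real q ^ (n * k)"
proof -
  define v where "v = min t (k div 2)"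
  define a where "a = real (t * n) / real (2 * t - 1)"
  define Q where "Q = real q"
  define \<beta> where "\<beta> = Q powr a"
  have Q1: "1 \<le> Q" using q1 unfolding Q_def by simp
  have vk: "v \<le> k" unfolding v_def by simp
  have d: "real (2 * t - 1) = 2 * real t - 1" using t1 by (simp add: of_nat_diff)
  have dpos: "0 < 2 * real t - 1" using t1 by simp
  have ki: "real t * (real k - 1) \<le> (real k - real v) * (2 * real t - 1)"
    unfolding v_def by (rule key_ineq[OF k2 t1])
  have s1: "a * (real k - 1) \<le> real n * (real k - real v)"
  proof -
    have "a * (real k - 1) = real n * (real t * (real k - 1)) / (2 * real t - 1)"
      unfolding a_def d by (simp add: field_simps)
    also have "\<dots> \<le> real n * ((real k - real v) * (2 * real t - 1)) / (2 * real t - 1)"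
      by (intro divide_right_mono mult_left_mono ki) (use dpos in auto)
    also have "\<dots> = real n * (real k - real v)" using dpos by simp
    finally show ?thesis .
  qed
  have s2: "\<beta> ^ (k - 1) \<le> Q ^ (n * (k - v))"
  proof -
    have "\<beta> ^ (k - 1) = Q powr (real (k - 1) * a)" unfolding \<beta>_def using Q1 by (simp add: powr_power)
    also have "\<dots> \<le> Q powr (real (n * (k - v)))"
    proof (rule powr_mono[OF _ Q1])
      have "real (k - 1) * a = a * (real k - 1)" using k2 by (simp add: of_nat_diff)
      also have "\<dots> \<le> real n * (real k - real v)" by (rule s1)
      also have "\<dots> = real (n * (k - v))" using vk by (simp add: of_nat_diff)
      finally show "real (k - 1) * a \<le> real (n * (k - v))" .
    qed
    also have "\<dots> = Q ^ (n * (k - v))" using Q1 powr_realpow[of Q "n * (k - v)"] by linarith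
    finally show ?thesis .
  qed
  have M0: "0 \<le> real M" by simp
  have b0: "0 \<le> \<beta>" unfolding \<beta>_def by simp
  have s3: "real M ^ k \<le> real M * c0 * Q ^ (n * (k - v))"
  proof -
    have "real M ^ k = real M * real M ^ (k - 1)" using k2 by (metis Suc_diff_1 less_le_trans pos2 power_Suc)
    also have "\<dots> \<le> real M * (c0 * \<beta>) ^ (k - 1)"
      using Mb unfolding \<beta>_def Q_def a_def by (intro mult_left_mono power_mono) auto
    also have "\<dots> = real M * (c0 ^ (k - 1) * \<beta> ^ (k - 1))" by (simp add: power_mult_distrib)
    also have "\<dots> \<le> real M * (c0 * Q ^ (n * (k - v)))"
    proof (intro mult_left_mono mult_mono s2)
      show "c0 ^ (k - 1) \<le> c0" using power_decreasing[of 1 "k - 1" c0] k2 c0 by simp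
    qed (use c0 b0 Q1 in auto)
    finally show ?thesis by (simp add: mult.assoc)
  qed
  have "real M ^ k * Q ^ (v * n) \<le> real M * c0 * Q ^ (n * (k - v)) * Q ^ (v * n)"
    using s3 Q1 by (intro mult_right_mono) auto
  also have "\<dots> = real M * c0 * Q ^ (n * k)"
  proof -
    have "n * (k - v) + v * n = n * k" using vk by (simp add: diff_mult_distrib2)
    thus ?thesis by (metis mult.assoc power_add)
  qed
  finally show ?thesis unfolding v_def Q_def .
qed

definition cnd :: "nat \<Rightarrow> nat \<Rightarrow> (nat \<Rightarrow> nat list) \<Rightarrow> nat set \<Rightarrow> bool" where
  "cnd t n f I \<longleftrightarrow> (\<forall>j<n. card ((\<lambda>a. f a ! j) ` I) \<le> min t (card I div 2))"

definition Ifam :: "nat \<Rightarrow> nat \<Rightarrow> nat set set" where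
  "Ifam M K = {I. I \<subseteq> {..<M} \<and> 2 \<le> card I \<and> card I \<le> K}"

definition Bad :: "nat \<Rightarrow> nat \<Rightarrow> nat \<Rightarrow> (nat \<Rightarrow> nat list) \<Rightarrow> nat set set" where
  "Bad t n M f = {I \<in> Ifam M (t + t * n). cnd t n f I}"

lemma finite_Ifam: "finite (Ifam M K)"
  unfolding Ifam_def by (rule finite_subset[of _ "Pow {..<M}"]) auto

lemma deletion:
  assumes f: "f \<in> {..<M} \<rightarrow>\<^sub>E words n q" and n: "n \<ge> 1" and t: "t \<ge> 1"
  shows "\<exists>C. is_MIPPC t n q C \<and> M \<le> card C + card (Bad t n M f)"
proof -
  define pick where "pick = (\<lambda>I::nat set. SOME a. a \<in> I)"
  have pickI: "pick I \<in> I" if "I \<noteq> {}" for I unfolding pick_def using that by (simp add: some_in_eq)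
  define A where "A = {..<M} - pick ` Bad t n M f"
  have fB: "finite (Bad t n M f)" unfolding Bad_def using finite_Ifam by simp
  have cA: "M \<le> card A + card (Bad t n M f)"
  proof -
    have "card {..<M} - card (pick ` Bad t n M f) \<le> card A" unfolding A_def by (rule diff_card_le_card_Diff) (use fB in simp)
    moreover have "card (pick ` Bad t n M f) \<le> card (Bad t n M f)" by (rule card_image_le[OF fB])
    ultimately show ?thesis by simp
  qed
  have fw: "f a \<in> words n q" if "a \<in> A" for a using f that unfolding A_def by auto
  have ne: "I \<noteq> {}" if "I \<in> Bad t n M f" for I
    using that unfolding Bad_def Ifam_def by auto
  have notin: "\<not> I \<subseteq> A" if "I \<in> Bad t n M f" for I
  proof
    assume "I \<subseteq> A"
    moreover have "pick I \<in> I" using pickI[OF ne[OF that]] .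
    ultimately have "pick I \<in> A" by auto
    thus False using that unfolding A_def by auto
  qed
  have inj: "inj_on f A"
  proof (rule inj_onI, rule ccontr)
    fix a b assume ab: "a \<in> A" "b \<in> A" "f a = f b" "a \<noteq> b"
    have "{a, b} \<in> Bad t n M f"
    proof -
      have c2: "card {a, b} = 2" using ab by simp
      have "{a,b} \<subseteq> {..<M}" using ab unfolding A_def by auto
      moreover have "2 \<le> t + t * n" proof -
        have "1 \<le> t * n" using n t by simp
        thus ?thesis using t by linarith
      qed
      ultimately have "{a,b} \<in> Ifam M (t + t * n)" unfolding Ifam_def using c2 by simp
      moreover have "cnd t n f {a,b}" unfolding cnd_def using ab t c2 by simp
      ultimately show ?thesis unfolding Bad_def by simp
    qed
    thus False using notin ab by blast
  qed
  define C where "C = f ` A"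
  have CW: "C \<subseteq> words n q" unfolding C_def using fw by auto
  have fA: "finite A" unfolding A_def by simp
  have fC: "finite C" unfolding C_def using fA by simp
  have "is_MIPPC t n q C"
  proof (rule noBad_MIPPC[OF CW])
    fix C' show "\<not> badC t n C C'"
    proof
      assume "badC t n C C'"
      then obtain W where W: "W \<subseteq> C" "smallW t n W" using bad_smallW[OF fC _ n] by blast
      define I where "I = {a \<in> A. f a \<in> W}"
      have IA: "I \<subseteq> A" unfolding I_def by auto
      have fI: "f ` I = W" using W(1) unfolding I_def C_def by auto
      have cI: "card I = card W" using card_image[OF inj_on_subset[OF inj IA]] fI by simp
      have "I \<in> Ifam M (t + t * n)" using IA cI W(2) unfolding Ifam_def smallW_def A_def by auto
      moreover have "cnd t n f I"
        unfolding cnd_def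
      proof (intro allI impI)
        fix j assume "j < n"
        have "(\<lambda>a. f a ! j) ` I = (\<lambda>w. w ! j) ` (f ` I)" by (simp add: image_image)
        hence "(\<lambda>a. f a ! j) ` I = (\<lambda>w. w ! j) ` W" using fI by simp
        thus "card ((\<lambda>a. f a ! j) ` I) \<le> min t (card I div 2)" using W(2) \<open>j < n\<close> cI unfolding smallW_def by simp
      qed
      ultimately have "I \<in> Bad t n M f" unfolding Bad_def by simp
      thus False using notin IA by blast
    qed
  qed
  moreover have "card C = card A" unfolding C_def by (rule card_image[OF inj])
  ultimately show ?thesis using cA by auto
qed

definition bnd :: "nat \<Rightarrow> nat \<Rightarrow> nat \<Rightarrow> nat \<Rightarrow> nat \<Rightarrow> nat" where
  "bnd t n q M k = (q ^ min t (k div 2)) ^ n * (min t (k div 2) ^ n) ^ k * (q ^ n) ^ (M - k)"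

lemma card_filter_sum: "finite A \<Longrightarrow> card {x\<in>A. P x} = (\<Sum>x\<in>A. if P x then 1 else 0)"
  by (simp add: sum.inter_filter[symmetric])

lemma sum_bad:
  assumes q: "q \<ge> 1"
  shows "(\<Sum>f\<in>{..<M} \<rightarrow>\<^sub>E words n q. card (Bad t n M f))
     \<le> (\<Sum>k\<in>{2..t+t*n}. (M choose k) * bnd t n q M k)"
proof -
  let ?F = "{..<M} \<rightarrow>\<^sub>E words n q"
  let ?K = "t + t * n"
  have fF: "finite ?F" by (simp add: finite_PiE finite_words)
  have "(\<Sum>f\<in>?F. card (Bad t n M f)) = (\<Sum>f\<in>?F. \<Sum>I\<in>Ifam M ?K. if cnd t n f I then 1 else 0)"
    unfolding Bad_def by (rule sum.cong[OF refl], rule card_filter_sum, rule finite_Ifam)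
  also have "\<dots> = (\<Sum>I\<in>Ifam M ?K. \<Sum>f\<in>?F. if cnd t n f I then 1 else 0)" by (rule sum.swap)
  also have "\<dots> = (\<Sum>I\<in>Ifam M ?K. card {f\<in>?F. cnd t n f I})"
    by (rule sum.cong[OF refl], rule card_filter_sum[symmetric], rule fF)
  also have "\<dots> \<le> (\<Sum>I\<in>Ifam M ?K. bnd t n q M (card I))"
  proof (rule sum_mono)
    fix I assume I: "I \<in> Ifam M ?K"
    hence IM: "I \<subseteq> {..<M}" unfolding Ifam_def by simp
    have "{f\<in>?F. cnd t n f I} \<subseteq> {f \<in> ?F. \<forall>j<n. card ((\<lambda>a. f a ! j) ` I) \<le> min t (card I div 2)}"
      unfolding cnd_def by blast
    hence "card {f\<in>?F. cnd t n f I} \<le> card {f \<in> ?F. \<forall>j<n. card ((\<lambda>a. f a ! j) ` I) \<le> min t (card I div 2)}"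
      using card_mono[of "{f \<in> ?F. \<forall>j<n. card ((\<lambda>a. f a ! j) ` I) \<le> min t (card I div 2)}"] fF by simp
    also have "\<dots> \<le> bnd t n q M (card I)" unfolding bnd_def by (rule count_cond[OF IM q])
    finally show "card {f\<in>?F. cnd t n f I} \<le> bnd t n q M (card I)" .
  qed
  also have "\<dots> = (\<Sum>k\<in>{2..?K}. \<Sum>I\<in>{I \<in> Ifam M ?K. card I = k}. bnd t n q M (card I))"
  proof (rule sum.group[symmetric])
    show "finite (Ifam M ?K)" by (rule finite_Ifam)
    show "finite {2..?K}" by simp
    show "card ` Ifam M ?K \<subseteq> {2..?K}" unfolding Ifam_def by auto
  qed
  also have "\<dots> = (\<Sum>k\<in>{2..?K}. (M choose k) * bnd t n q M k)"
  proof (rule sum.cong[OF refl])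
    fix k assume k: "k \<in> {2..?K}"
    have eq: "{I \<in> Ifam M ?K. card I = k} = {B. B \<subseteq> {..<M} \<and> card B = k}"
      using k unfolding Ifam_def by auto
    have "(\<Sum>I\<in>{I \<in> Ifam M ?K. card I = k}. bnd t n q M (card I)) = (\<Sum>I\<in>{I \<in> Ifam M ?K. card I = k}. bnd t n q M k)"
      by (rule sum.cong) auto
    also have "\<dots> = card {B. B \<subseteq> {..<M} \<and> card B = k} * bnd t n q M k" unfolding eq by simp
    also have "\<dots> = (M choose k) * bnd t n q M k" using n_subsets[of "{..<M}" k] by simp
    finally show "(\<Sum>I\<in>{I \<in> Ifam M ?K. card I = k}. bnd t n q M (card I)) = (M choose k) * bnd t n q M k" .
  qed
  finally show ?thesis .
qed

theorem theorem5:
  fixes n t :: nat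
  assumes "n \<ge> 2" and "t \<ge> 2"
  shows "\<exists>c::real. c > 0 \<and> (\<exists>Q0::nat. \<forall>q\<ge>Q0. \<exists>C. is_MIPPC t n q C \<and>
           real (card C) \<ge> c * real q powr (real (t * n) / real (2 * t - 1)))"
proof -
  have n1: "n \<ge> 1" and t1: "t \<ge> 1" using assms by auto
  define K where "K = t + t * n"
  define L where "L = real K * real t ^ (n * K)"
  have K1: "1 \<le> K" unfolding K_def using t1 by simp
  have tp: "1 \<le> real t ^ (n * K)" using t1 by simp
  have L1: "1 \<le> L" unfolding L_def using K1 tp
    by (metis mult_mono' of_nat_1 of_nat_le_iff mult_1 zero_le_one)
  define c0 where "c0 = 1 / (2 * L)"
  have c0p: "0 < c0" unfolding c0_def using L1 by simp
  have c01: "c0 \<le> 1" unfolding c0_def using L1 by simp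
  have c0L: "c0 * L = 1 / 2" unfolding c0_def using L1 by simp
  define a where "a = real (t * n) / real (2 * t - 1)"
  have a1: "1 \<le> a"
  proof -
    have h1: "2 * t - 1 \<le> t * n" using assms by (metis diff_le_self le_trans mult.commute mult_le_mono2)
    have h2: "0 < real (2 * t - 1)" using t1 by simp
    have h3: "real (2 * t - 1) \<le> real (t * n)" using h1 by (simp only: of_nat_le_iff)
    show ?thesis unfolding a_def using h2 h3 by (simp only: le_divide_eq_1_pos)
  qed
  define Q0 where "Q0 = nat \<lceil>2 / c0\<rceil> + 1"
  show ?thesis
  proof (rule exI[of _ "c0 / 4"], intro conjI exI[of _ Q0] allI impI)
    show "0 < c0 / 4" using c0p by simp
    fix q assume q: "Q0 \<le> q"
    have q1: "1 \<le> q" using q unfolding Q0_def by simp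
    have qge: "2 / c0 \<le> real q"
    proof -
      have h1: "nat \<lceil>2 / c0\<rceil> \<le> q" using q unfolding Q0_def by (rule add_leD1)
      have "2 / c0 \<le> real (nat \<lceil>2 / c0\<rceil>)" by (rule real_nat_ceiling_ge)
      also have "\<dots> \<le> real q" using h1 by (simp only: of_nat_le_iff)
      finally show ?thesis .
    qed
    define \<beta> where "\<beta> = real q powr a"
    have \<beta>q: "real q \<le> \<beta>"
    proof -
      have "real q powr 1 \<le> real q powr a" using a1 q1 by (intro powr_mono) auto
      thus ?thesis unfolding \<beta>_def by simp
    qed
    have c0b2: "2 \<le> c0 * \<beta>"
    proof -
      have "2 \<le> c0 * real q" using qge c0p by (simp add: field_simps)
      also have "\<dots> \<le> c0 * \<beta>" using \<beta>q c0p by simp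
      finally show ?thesis .
    qed
    define M where "M = nat \<lfloor>c0 * \<beta>\<rfloor>"
    have Mle: "real M \<le> c0 * \<beta>" unfolding M_def using c0b2 by linarith
    have Mge: "c0 * \<beta> - 1 \<le> real M" unfolding M_def using c0b2 by linarith
    define F where "F = {..<M} \<rightarrow>\<^sub>E words n q"
    have fF: "finite F" unfolding F_def by (simp add: finite_PiE finite_words)
    have cF: "card F = q ^ (n * M)" unfolding F_def by (simp add: card_PiE card_words power_mult)
    have Fne: "F \<noteq> {}" using cF q1 by (metis card.empty power_not_zero zero_neq_one not_one_le_zero)
    define m where "m = Min ((\<lambda>g. card (Bad t n M g)) ` F)"
    have "m \<in> (\<lambda>g. card (Bad t n M g)) ` F" unfolding m_def
      by (rule Min_in) (use fF Fne in auto)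
    then obtain f where f: "f \<in> F" "card (Bad t n M f) = m" by (metis imageE)
    have "card F * m = (\<Sum>g\<in>F. m)" by simp
    also have "\<dots> \<le> (\<Sum>g\<in>F. card (Bad t n M g))"
      by (rule sum_mono) (use fF in \<open>simp add: m_def\<close>)
    also have "\<dots> \<le> (\<Sum>k\<in>{2..K}. (M choose k) * bnd t n q M k)"
      unfolding F_def K_def by (rule sum_bad[OF q1])
    finally have avg: "card F * card (Bad t n M f) \<le> (\<Sum>k\<in>{2..K}. (M choose k) * bnd t n q M k)"
      using f by simp
    have tb: "real ((M choose k) * bnd t n q M k) \<le> real (card F) * (real M * c0 * real t ^ (n * K))"
      if k: "k \<in> {2..K}" for k
    proof (cases "k \<le> M")
      case False
      hence z: "M choose k = 0" by (simp add: binomial_eq_0)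
      have "real ((M choose k) * bnd t n q M k) = 0" using z by simp
      moreover have "0 \<le> real (card F) * (real M * c0 * real t ^ (n * K))" using c0p by simp
      ultimately show ?thesis by linarith
    next
      case True
      define v where "v = min t (k div 2)"
      have eb: "real (bnd t n q M k) = real q ^ (v * n) * (real v ^ (n * k) * real q ^ (n * (M - k)))"
        unfolding bnd_def v_def by (simp add: power_mult)
      have vt: "real v ^ (n * k) \<le> real t ^ (n * K)"
      proof -
        have "real v ^ (n * k) \<le> real t ^ (n * k)" unfolding v_def by (intro power_mono) auto
        also have "\<dots> \<le> real t ^ (n * K)" using k t1 by (intro power_increasing) auto
        finally show ?thesis .
      qed
      have ch: "real (M choose k) \<le> real M ^ k"
        using binomial_le_pow[OF True] by (metis of_nat_le_iff of_nat_power)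
      have tbd: "real M ^ k * real q ^ (v * n) \<le> real M * c0 * real q ^ (n * k)"
        unfolding v_def by (rule term_bound) (use k t1 q1 c0p c01 Mle in \<open>auto simp: \<beta>_def a_def\<close>)
      have p1: "real (M choose k) * real q ^ (v * n) \<le> real M * c0 * real q ^ (n * k)"
        using mult_right_mono[OF ch, of "real q ^ (v * n)"] tbd by simp
      have p2: "real v ^ (n * k) * real q ^ (n * (M - k)) \<le> real t ^ (n * K) * real q ^ (n * (M - k))"
        using mult_right_mono[OF vt, of "real q ^ (n * (M - k))"] by simp
      have nn1: "0 \<le> real M * c0 * real q ^ (n * k)" using c0p by simp
      have nn2: "0 \<le> real v ^ (n * k) * real q ^ (n * (M - k))" by simp
      have "real ((M choose k) * bnd t n q M k)
          = (real (M choose k) * real q ^ (v * n)) * (real v ^ (n * k) * real q ^ (n * (M - k)))"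
        using eb by (simp only: of_nat_mult mult.assoc)
      also have "\<dots> \<le> (real M * c0 * real q ^ (n * k)) * (real t ^ (n * K) * real q ^ (n * (M - k)))"
        by (rule mult_mono[OF p1 p2 nn1 nn2])
      also have "\<dots> = (real M * c0 * real t ^ (n * K)) * (real q ^ (n * k) * real q ^ (n * (M - k)))"
        by (simp only: mult_ac)
      also have "real q ^ (n * k) * real q ^ (n * (M - k)) = real (card F)"
      proof -
        have "n * k + n * (M - k) = n * M" using True by (simp add: diff_mult_distrib2)
        thus ?thesis unfolding cF by (metis of_nat_power power_add)
      qed
      finally show ?thesis by (simp only: mult_ac)
    qed
    have "real (card F) * real (card (Bad t n M f)) \<le> real (\<Sum>k\<in>{2..K}. (M choose k) * bnd t n q M k)"
      using avg by (metis of_nat_le_iff of_nat_mult)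
    also have "\<dots> = (\<Sum>k\<in>{2..K}. real ((M choose k) * bnd t n q M k))" by (rule of_nat_sum)
    also have "\<dots> \<le> (\<Sum>k\<in>{2..K}. real (card F) * (real M * c0 * real t ^ (n * K)))"
      by (rule sum_mono) (rule tb)
    also have "\<dots> = real (card {2..K}) * (real (card F) * (real M * c0 * real t ^ (n * K)))" by simp
    also have "\<dots> \<le> real K * (real (card F) * (real M * c0 * real t ^ (n * K)))"
      by (intro mult_right_mono) (use c0p in auto)
    also have "\<dots> = real (card F) * (real M * (c0 * L))" unfolding L_def by (simp add: algebra_simps)
    also have "\<dots> = real (card F) * (real M / 2)" using c0L by simp
    finally have "real (card F) * real (card (Bad t n M f)) \<le> real (card F) * (real M / 2)" .
    moreover have "0 < real (card F)" using fF Fne by (simp add: card_gt_0_iff)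
    ultimately have bB: "real (card (Bad t n M f)) \<le> real M / 2" by simp
    obtain C where C: "is_MIPPC t n q C" "M \<le> card C + card (Bad t n M f)"
      using deletion[of f M n q t] f n1 t1 unfolding F_def by blast
    have "c0 / 4 * real q powr (real (t * n) / real (2 * t - 1)) = c0 * \<beta> / 4"
      unfolding \<beta>_def a_def by simp
    also have "\<dots> \<le> real (card C)"
    proof -
      have "real M \<le> real (card C) + real (card (Bad t n M f))" using C(2) by linarith
      thus ?thesis using bB Mge c0b2 by linarith
    qed
    finally show "\<exists>C. is_MIPPC t n q C \<and> c0 / 4 * real q powr (real (t * n) / real (2 * t - 1)) \<le> real (card C)"
      using C(1) by blast
  qed
qed

end
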